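(* Let $m,n,k$ be positive integers, $A\in\mathbb{R}^{m\times n}$, $x^*\in\mathbb{R}^n$ with support $S^*=\{i: x^*_i\neq 0\}$ satisfying $1\le |S^*|\le k$, $e\in\mathbb{R}^m$ and $y=Ax^*+e$. Assume $A$ satisfies the $(2k+1)$-RIP, that $\|A_i\|_2=1$ for every column $A_i$ of $A$, and that $$\gamma_k^{RIP}\|e\|_2<\frac{\min_{i\in S^*}|x^*_i|}{2k}-\alpha_k^{RIP}\|x^*\|_2 .$$ Then for every initialization $\mathcal{X}^0\in\mathbb{R}^n$ and every step size $\eta>0$, the sets $S^t$ generated by SEA satisfy: there exists an integer $t_s\le T_{RIP}$ with $S^*\subseteq S^{t_s}$, where $$T_{RIP}=\frac{2k\frac{\|\mathcal{X}^0\|_\infty}{\eta}+(k+1)\min_{i\in S^*}|x^*_i|}{\min_{i\in S^*}|x^*_i|-2k\left(\alpha_k^{RIP}\|x^*\|_2+\gamma_k^{RIP}\|e\|_2\right)}.$$ If moreover $\min_{i\in S^*}|x^*_i|>\frac{2}{\sqrt{1-\delta_{2k}}}\|e\|_2$ and SEA is run for $N>T_{RIP}$ iterations, then $S^*\subseteq S^{t_{BEST}}$ and $\|x^{t_{BEST}}-x^*\|_2\le\frac{2}{\sqrt{1-\delta_k}}\|e\|_2$.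
   Context: For $l\in\{1,\dots,n\}$, the restricted isometry constant $\delta_l$ of $A$ is the smallest $\delta\ge0$ such that $(1-\delta)\|x\|_2^2\le\|Ax\|_2^2\le(1+\delta)\|x\|_2^2$ for all $x\in\mathbb{R}^n$ with at most $l$ nonzero entries; $A$ satisfies the $l$-RIP if $\delta_l<1$. Define $\alpha_k^{RIP}=\delta_{2k+1}\left(1+\frac{\delta_{2k}}{1-\delta_k}\right)$ and $\gamma_k^{RIP}=1+\frac{\delta_{2k+1}\sqrt{1+\delta_k}}{1-\delta_k}$. For $v\in\mathbb{R}^n$, $\mathrm{largest}_k(v)$ is the set of indices of the $k$ entries of $v$ with largest absolute value (ties broken by selecting the highest indices). For $S\subseteq\{1,\dots,n\}$, $A_S$ is the submatrix of $A$ formed by the columns indexed by $S$, $v_S$ the restriction of a vector $v$ to $S$, and $A_S^\dagger$ the Moore–Penrose pseudoinverse of $A_S$. The Support Exploration Algorithm (SEA) with initialization $\mathcal{X}^0$ and step size $\eta>0$ generates, for $t=0,1,2,\dots$: $S^t=\mathrm{largest}_k(\mathcal{X}^t)$; $x^t\in\mathbb{R}^n$ with $x^t_i=0$ for $i\notin S^t$ and $x^t_{S^t}=A_{S^t}^\dagger y$; $\mathcal{X}^{t+1}=\mathcal{X}^t-\eta A^T(Ax^t-y)$. When SEA is run for $N$ iterations (computing $x^0,\dots,x^{N-1}$), it outputs $x^{t_{BEST}}$ where $t_{BEST}\in\arg\min_{t'\in\{0,\dots,N-1\}}\|Ax^{t'}-y\|_2$. *)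

theory Defs
  imports Complex_Main
begin

text \<open>Vectors of R^n are functions nat => real, only the entries with
index < n (i.e. indices 0..n-1 in place of 1..n) are meaningful. An m x n matrix A is
a function nat => nat => real with entry A i j, i < m, j < n.\<close>

definition vnorm :: "nat \<Rightarrow> (nat \<Rightarrow> real) \<Rightarrow> real" where
  "vnorm n x = sqrt (\<Sum>i<n. (x i)\<^sup>2)"

definition vinfnorm :: "nat \<Rightarrow> (nat \<Rightarrow> real) \<Rightarrow> real" where
  "vinfnorm n x = Max ((\<lambda>i. \<bar>x i\<bar>) ` {..<n})"

definition mv :: "(nat \<Rightarrow> nat \<Rightarrow> real) \<Rightarrow> nat \<Rightarrow> (nat \<Rightarrow> real) \<Rightarrow> (nat \<Rightarrow> real)" where
  "mv A n x = (\<lambda>i. \<Sum>j<n. A i j * x j)"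

definition supp :: "nat \<Rightarrow> (nat \<Rightarrow> real) \<Rightarrow> nat set" where
  "supp n x = {i. i < n \<and> x i \<noteq> 0}"

definition ric :: "(nat \<Rightarrow> nat \<Rightarrow> real) \<Rightarrow> nat \<Rightarrow> nat \<Rightarrow> nat \<Rightarrow> real" where
  "ric A m n l = Inf {d. d \<ge> 0 \<and>
     (\<forall>x. (\<forall>i\<ge>n. x i = 0) \<and> card (supp n x) \<le> l \<longrightarrow>
        (1 - d) * (vnorm n x)\<^sup>2 \<le> (vnorm m (mv A n x))\<^sup>2 \<and>
        (vnorm m (mv A n x))\<^sup>2 \<le> (1 + d) * (vnorm n x)\<^sup>2)}"

definition alphaRIP :: "(nat \<Rightarrow> nat \<Rightarrow> real) \<Rightarrow> nat \<Rightarrow> nat \<Rightarrow> nat \<Rightarrow> real" where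
  "alphaRIP A m n k = ric A m n (2*k+1) * (1 + ric A m n (2*k) / (1 - ric A m n k))"

definition gammaRIP :: "(nat \<Rightarrow> nat \<Rightarrow> real) \<Rightarrow> nat \<Rightarrow> nat \<Rightarrow> nat \<Rightarrow> real" where
  "gammaRIP A m n k = 1 + ric A m n (2*k+1) * sqrt (1 + ric A m n k) / (1 - ric A m n k)"

text \<open>largest_k: indices (< n) of the k entries of largest absolute value, ties broken
by preferring higher indices.\<close>
definition largest :: "nat \<Rightarrow> nat \<Rightarrow> (nat \<Rightarrow> real) \<Rightarrow> nat set" where
  "largest n k v = {i. i < n \<and>
     card {j. j < n \<and> (\<bar>v j\<bar> > \<bar>v i\<bar> \<or> (\<bar>v j\<bar> = \<bar>v i\<bar> \<and> j > i))} < k}"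

definition mmul :: "nat set \<Rightarrow> (nat \<Rightarrow> nat \<Rightarrow> real) \<Rightarrow> (nat \<Rightarrow> nat \<Rightarrow> real) \<Rightarrow> (nat \<Rightarrow> nat \<Rightarrow> real)" where
  "mmul J M N = (\<lambda>i l. \<Sum>j\<in>J. M i j * N j l)"

text \<open>Moore--Penrose pseudoinverse of the matrix M with rows indexed by I and columns
indexed by J (via the four Penrose equations); it has rows indexed by J and columns by I,
and is set to 0 outside J x I.\<close>
definition pinv :: "nat set \<Rightarrow> nat set \<Rightarrow> (nat \<Rightarrow> nat \<Rightarrow> real) \<Rightarrow> (nat \<Rightarrow> nat \<Rightarrow> real)" where
  "pinv I J M = (THE B. (\<forall>i l. \<not> (i \<in> J \<and> l \<in> I) \<longrightarrow> B i l = 0) \<and>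
     (\<forall>i\<in>I. \<forall>l\<in>J. mmul I (mmul J M B) M i l = M i l) \<and>
     (\<forall>i\<in>J. \<forall>l\<in>I. mmul J (mmul I B M) B i l = B i l) \<and>
     (\<forall>i\<in>I. \<forall>l\<in>I. mmul J M B i l = mmul J M B l i) \<and>
     (\<forall>i\<in>J. \<forall>l\<in>J. mmul I B M i l = mmul I B M l i))"

text \<open>x supported on S with x_S = (A_S)^dagger y (A_S: rows {..<m}, columns S).\<close>
definition lsq :: "(nat \<Rightarrow> nat \<Rightarrow> real) \<Rightarrow> nat \<Rightarrow> nat set \<Rightarrow> (nat \<Rightarrow> real) \<Rightarrow> (nat \<Rightarrow> real)" where
  "lsq A m S y = (\<lambda>i. if i \<in> S then (\<Sum>p<m. pinv {..<m} S A i p * y p) else 0)"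

primrec seaX :: "(nat \<Rightarrow> nat \<Rightarrow> real) \<Rightarrow> nat \<Rightarrow> nat \<Rightarrow> nat \<Rightarrow> real \<Rightarrow> (nat \<Rightarrow> real)
                  \<Rightarrow> (nat \<Rightarrow> real) \<Rightarrow> nat \<Rightarrow> (nat \<Rightarrow> real)" where
  "seaX A m n k eta y X0 0 = X0"
| "seaX A m n k eta y X0 (Suc t) =
     (let X = seaX A m n k eta y X0 t;
          x = lsq A m (largest n k X) y
      in (\<lambda>i. X i - eta * (\<Sum>p<m. A p i * (mv A n x p - y p))))"

definition seaS :: "(nat \<Rightarrow> nat \<Rightarrow> real) \<Rightarrow> nat \<Rightarrow> nat \<Rightarrow> nat \<Rightarrow> real \<Rightarrow> (nat \<Rightarrow> real)
                  \<Rightarrow> (nat \<Rightarrow> real) \<Rightarrow> nat \<Rightarrow> nat set" where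
  "seaS A m n k eta y X0 t = largest n k (seaX A m n k eta y X0 t)"

definition seax :: "(nat \<Rightarrow> nat \<Rightarrow> real) \<Rightarrow> nat \<Rightarrow> nat \<Rightarrow> nat \<Rightarrow> real \<Rightarrow> (nat \<Rightarrow> real)
                  \<Rightarrow> (nat \<Rightarrow> real) \<Rightarrow> nat \<Rightarrow> (nat \<Rightarrow> real)" where
  "seax A m n k eta y X0 t = lsq A m (seaS A m n k eta y X0 t) y"

definition is_tbest :: "(nat \<Rightarrow> nat \<Rightarrow> real) \<Rightarrow> nat \<Rightarrow> nat \<Rightarrow> nat \<Rightarrow> real \<Rightarrow> (nat \<Rightarrow> real)
                  \<Rightarrow> (nat \<Rightarrow> real) \<Rightarrow> nat \<Rightarrow> nat \<Rightarrow> bool" where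
  "is_tbest A m n k eta y X0 N t \<longleftrightarrow> t < N \<and>
     (\<forall>t'<N. vnorm m (\<lambda>i. mv A n (seax A m n k eta y X0 t) i - y i)
             \<le> vnorm m (\<lambda>i. mv A n (seax A m n k eta y X0 t') i - y i))"

end

theory Submission
  imports Defs "HOL-Analysis.Convex" "HOL-Library.Product_Lexorder"
begin

definition ip :: "nat \<Rightarrow> (nat \<Rightarrow> real) \<Rightarrow> (nat \<Rightarrow> real) \<Rightarrow> real" where
  "ip m u v = (\<Sum>p<m. u p * v p)"

lemma vnorm_sq: "(vnorm m u)\<^sup>2 = (\<Sum>p<m. (u p)\<^sup>2)"
  unfolding vnorm_def by (simp add: sum_nonneg)

lemma vnorm_nonneg: "0 \<le> vnorm m u"
  unfolding vnorm_def by (simp add: sum_nonneg)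

lemma ip_self: "ip m u u = (vnorm m u)\<^sup>2"
  unfolding ip_def vnorm_sq by (simp add: power2_eq_square)

lemma ip_sym: "ip m u v = ip m v u"
  unfolding ip_def by (simp add: mult.commute)

lemma CS: "\<bar>ip m u v\<bar> \<le> vnorm m u * vnorm m v"
proof -
  have "(ip m u v)\<^sup>2 \<le> (\<Sum>p<m. (u p)\<^sup>2) * (\<Sum>p<m. (v p)\<^sup>2)"
    unfolding ip_def by (rule Cauchy_Schwarz_ineq_sum)
  also have "\<dots> = (vnorm m u * vnorm m v)\<^sup>2"
    by (simp add: vnorm_sq power_mult_distrib)
  finally have "\<bar>ip m u v\<bar> \<le> \<bar>vnorm m u * vnorm m v\<bar>"
    by (simp add: abs_le_square_iff)
  then show ?thesis by (simp add: vnorm_nonneg)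
qed

lemma vnorm_add_sq: "(vnorm m (\<lambda>p. a * u p + b * v p))\<^sup>2
   = a\<^sup>2 * (vnorm m u)\<^sup>2 + 2 * a * b * ip m u v + b\<^sup>2 * (vnorm m v)\<^sup>2"
  unfolding vnorm_sq ip_def
  by (simp add: power2_eq_square algebra_simps sum.distrib sum_distrib_left)

lemma vnorm_triangle: "vnorm m (\<lambda>p. u p + v p) \<le> vnorm m u + vnorm m v"
proof -
  have "(vnorm m (\<lambda>p. u p + v p))\<^sup>2 = (vnorm m u)\<^sup>2 + 2 * ip m u v + (vnorm m v)\<^sup>2"
    using vnorm_add_sq[of m 1 u 1 v] by simp
  also have "\<dots> \<le> (vnorm m u + vnorm m v)\<^sup>2"
    using CS[of m u v] by (simp add: power2_eq_square algebra_simps)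
  finally show ?thesis
    by (rule power2_le_imp_le[OF _ add_nonneg_nonneg[OF vnorm_nonneg vnorm_nonneg]])
qed

lemma vnorm_zero_iff: "vnorm m u = 0 \<longleftrightarrow> (\<forall>p<m. u p = 0)"
  unfolding vnorm_def by (auto simp add: sum_nonneg_eq_0_iff)

lemma vnorm_cong: "(\<And>p. p < m \<Longrightarrow> u p = v p) \<Longrightarrow> vnorm m u = vnorm m v"
  unfolding vnorm_def by simp

lemma vnorm_mono: "(\<And>p. p < m \<Longrightarrow> \<bar>u p\<bar> \<le> \<bar>v p\<bar>) \<Longrightarrow> vnorm m u \<le> vnorm m v"
  unfolding vnorm_def
  by (intro real_sqrt_le_mono sum_mono) (simp add: abs_le_square_iff)

lemma vnorm_minus: "vnorm m (\<lambda>p. - u p) = vnorm m u"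
  unfolding vnorm_def by simp

lemma vnorm_ge_comp: "i < m \<Longrightarrow> \<bar>u i\<bar> \<le> vnorm m u"
proof -
  assume "i < m"
  then have "(u i)\<^sup>2 \<le> (\<Sum>p<m. (u p)\<^sup>2)"
    by (intro member_le_sum) auto
  then have "(u i)\<^sup>2 \<le> (vnorm m u)\<^sup>2" by (simp add: vnorm_sq)
  then show ?thesis
    by (metis abs_le_square_iff abs_of_nonneg vnorm_nonneg)
qed

lemma vnorm_scale: "vnorm m (\<lambda>p. a * u p) = \<bar>a\<bar> * vnorm m u"
  unfolding vnorm_def by (simp add: power_mult_distrib sum_distrib_left[symmetric] real_sqrt_mult)

lemma mv_lin: "mv A n (\<lambda>j. a * u j + b * v j) p = a * mv A n u p + b * mv A n v p"
  unfolding mv_def by (simp add: algebra_simps sum.distrib sum_distrib_left)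

lemma mv_add: "mv A n (\<lambda>j. u j + v j) p = mv A n u p + mv A n v p"
  unfolding mv_def by (simp add: algebra_simps sum.distrib)

lemma mv_minus: "mv A n (\<lambda>j. u j - v j) p = mv A n u p - mv A n v p"
  unfolding mv_def by (simp add: algebra_simps sum_subtractf)

lemma mv_bound:
  "(vnorm m (mv A n x))\<^sup>2 \<le> (\<Sum>p<m. \<Sum>j<n. (A p j)\<^sup>2) * (vnorm n x)\<^sup>2"
proof -
  have "(vnorm m (mv A n x))\<^sup>2 = (\<Sum>p<m. (\<Sum>j<n. A p j * x j)\<^sup>2)"
    by (simp add: vnorm_sq mv_def)
  also have "\<dots> \<le> (\<Sum>p<m. (\<Sum>j<n. (A p j)\<^sup>2) * (\<Sum>j<n. (x j)\<^sup>2))"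
    by (intro sum_mono Cauchy_Schwarz_ineq_sum)
  also have "\<dots> = (\<Sum>p<m. \<Sum>j<n. (A p j)\<^sup>2) * (vnorm n x)\<^sup>2"
    by (simp add: vnorm_sq sum_distrib_right)
  finally show ?thesis .
qed

definition Dset :: "(nat \<Rightarrow> nat \<Rightarrow> real) \<Rightarrow> nat \<Rightarrow> nat \<Rightarrow> nat \<Rightarrow> real set" where
  "Dset A m n l = {d. d \<ge> 0 \<and>
     (\<forall>x. (\<forall>i\<ge>n. x i = 0) \<and> card (supp n x) \<le> l \<longrightarrow>
        (1 - d) * (vnorm n x)\<^sup>2 \<le> (vnorm m (mv A n x))\<^sup>2 \<and>
        (vnorm m (mv A n x))\<^sup>2 \<le> (1 + d) * (vnorm n x)\<^sup>2)}"

lemma ric_Dset: "ric A m n l = Inf (Dset A m n l)"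
  unfolding ric_def Dset_def by simp

lemma Dset_ne: "Dset A m n l \<noteq> {}"
proof -
  define F where "F = (\<Sum>p<m. \<Sum>j<n. (A p j)\<^sup>2)"
  have "max 1 F \<in> Dset A m n l"
    unfolding Dset_def
  proof (safe)
    fix x :: "nat \<Rightarrow> real"
    have a: "(vnorm m (mv A n x))\<^sup>2 \<le> F * (vnorm n x)\<^sup>2" using mv_bound F_def by simp
    have "F * (vnorm n x)\<^sup>2 \<le> (1 + max 1 F) * (vnorm n x)\<^sup>2"
      by (intro mult_right_mono) auto
    with a show "(vnorm m (mv A n x))\<^sup>2 \<le> (1 + max 1 F) * (vnorm n x)\<^sup>2" by linarith
    have "(1 - max 1 F) * (vnorm n x)\<^sup>2 \<le> 0"
      by (intro mult_nonpos_nonneg) auto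
    then show "(1 - max 1 F) * (vnorm n x)\<^sup>2 \<le> (vnorm m (mv A n x))\<^sup>2"
      by (meson order_trans zero_le_power2)
  qed auto
  then show ?thesis by blast
qed

lemma Dset_bdd: "bdd_below (Dset A m n l)"
  unfolding Dset_def bdd_below_def by auto

lemma ric_nonneg: "0 \<le> ric A m n l"
  unfolding ric_Dset using Dset_ne
  by (intro cInf_greatest) (auto simp: Dset_def)

lemma ric_mono: "l \<le> l' \<Longrightarrow> ric A m n l \<le> ric A m n l'"
  unfolding ric_Dset
  by (intro cInf_superset_mono Dset_ne Dset_bdd) (auto simp: Dset_def)

lemma ric_props:
  assumes "\<forall>i\<ge>n. x i = 0" "card (supp n x) \<le> l"
  shows "(1 - ric A m n l) * (vnorm n x)\<^sup>2 \<le> (vnorm m (mv A n x))\<^sup>2 \<and>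
         (vnorm m (mv A n x))\<^sup>2 \<le> (1 + ric A m n l) * (vnorm n x)\<^sup>2"
proof (cases "vnorm n x = 0")
  case True
  then have "\<forall>j<n. x j = 0" by (simp add: vnorm_zero_iff)
  then have "mv A n x = (\<lambda>p. 0)" unfolding mv_def by simp
  then show ?thesis using True by (simp add: vnorm_def)
next
  case False
  define N where "N = (vnorm n x)\<^sup>2"
  define M where "M = (vnorm m (mv A n x))\<^sup>2"
  have Np: "N > 0" using False vnorm_nonneg[of n x] N_def by simp
  have h: "\<And>d. d \<in> Dset A m n l \<Longrightarrow> (1 - d) * N \<le> M \<and> M \<le> (1 + d) * N"
    using assms unfolding Dset_def N_def M_def by blast
  have "(N - M) / N \<le> ric A m n l"
    unfolding ric_Dset
  proof (rule cInf_greatest[OF Dset_ne])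
    fix d assume "d \<in> Dset A m n l"
    then have "(1 - d) * N \<le> M" using h by blast
    then show "(N - M) / N \<le> d" using Np by (simp add: field_simps)
  qed
  moreover have "(M - N) / N \<le> ric A m n l"
    unfolding ric_Dset
  proof (rule cInf_greatest[OF Dset_ne])
    fix d assume "d \<in> Dset A m n l"
    then have "M \<le> (1 + d) * N" using h by blast
    then show "(M - N) / N \<le> d" using Np by (simp add: field_simps)
  qed
  ultimately show ?thesis using Np unfolding N_def[symmetric] M_def[symmetric]
    by (simp add: field_simps)
qed


lemma supp_sub: "supp n x \<subseteq> {..<n}"
  unfolding supp_def by auto

lemma finite_supp: "finite (supp n x)"
  using supp_sub finite_subset by blast

lemma ip_disj: "(\<forall>i. u i = 0 \<or> v i = 0) \<Longrightarrow> ip n u v = 0"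
  unfolding ip_def by (metis (no_types, lifting) mult_eq_0_iff sum.neutral)

lemma mv_zero: "(\<forall>j<n. u j = 0) \<Longrightarrow> mv A n u p = 0"
  unfolding mv_def by simp

lemma polar:
  assumes u0: "\<forall>i\<ge>n. u i = 0" and v0: "\<forall>i\<ge>n. v i = 0" and dj: "\<forall>i. u i = 0 \<or> v i = 0"
    and cl: "card (supp n u) + card (supp n v) \<le> l"
  shows "\<bar>ip m (mv A n u) (mv A n v)\<bar> \<le> ric A m n l * vnorm n u * vnorm n v"
proof (cases "vnorm n u = 0 \<or> vnorm n v = 0")
  case True
  then have "(\<forall>p. mv A n u p = 0) \<or> (\<forall>p. mv A n v p = 0)"
    using mv_zero vnorm_zero_iff by metis
  then have "ip m (mv A n u) (mv A n v) = 0" unfolding ip_def by auto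
  then show ?thesis using ric_nonneg vnorm_nonneg by simp
next
  case False
  define a where "a = vnorm n v"
  define b where "b = vnorm n u"
  have ap: "a > 0" and bp: "b > 0" using False vnorm_nonneg a_def b_def
    by (metis less_eq_real_def)+
  define \<delta> where "\<delta> = ric A m n l"
  define P where "P = ip m (mv A n u) (mv A n v)"
  have key: "4 * a * b * (s * P) \<le> 4 * \<delta> * a\<^sup>2 * b\<^sup>2" if s: "s = 1 \<or> s = -1" for s :: real
  proof -
    define wp where "wp = (\<lambda>i. a * u i + (s * b) * v i)"
    define wm where "wm = (\<lambda>i. a * u i + (- s * b) * v i)"
    have s2: "s\<^sup>2 = 1" using s by auto
    have sub: "supp n wp \<subseteq> supp n u \<union> supp n v" "supp n wm \<subseteq> supp n u \<union> supp n v"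
      unfolding wp_def wm_def supp_def by auto
    have "card (supp n wp) \<le> l" "card (supp n wm) \<le> l"
      using card_mono[OF finite_UnI[OF finite_supp finite_supp] sub(1)]
        card_mono[OF finite_UnI[OF finite_supp finite_supp] sub(2)]
        card_Un_le[of "supp n u" "supp n v"] cl by linarith+
    moreover have "\<forall>i\<ge>n. wp i = 0" "\<forall>i\<ge>n. wm i = 0" using u0 v0 unfolding wp_def wm_def by auto
    ultimately have rp: "(vnorm m (mv A n wp))\<^sup>2 \<le> (1 + \<delta>) * (vnorm n wp)\<^sup>2"
      and rm: "(1 - \<delta>) * (vnorm n wm)\<^sup>2 \<le> (vnorm m (mv A n wm))\<^sup>2"
      using ric_props \<delta>_def by blast+
    have ipuv: "ip n u v = 0" using ip_disj dj by blast
    have nwp: "(vnorm n wp)\<^sup>2 = 2 * a\<^sup>2 * b\<^sup>2"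
      unfolding wp_def vnorm_add_sq ipuv using s2 a_def b_def by (simp add: power_mult_distrib)
    have nwm: "(vnorm n wm)\<^sup>2 = 2 * a\<^sup>2 * b\<^sup>2"
      unfolding wm_def vnorm_add_sq ipuv using s2 a_def b_def by (simp add: power_mult_distrib)
    have mwp: "mv A n wp = (\<lambda>p. a * mv A n u p + (s * b) * mv A n v p)"
      unfolding wp_def by (intro ext mv_lin)
    have mwm: "mv A n wm = (\<lambda>p. a * mv A n u p + (- s * b) * mv A n v p)"
      unfolding wm_def by (intro ext mv_lin)
    have e1: "(vnorm m (mv A n wp))\<^sup>2 = a\<^sup>2 * (vnorm m (mv A n u))\<^sup>2 + 2 * a * (s * b) * P + b\<^sup>2 * (vnorm m (mv A n v))\<^sup>2"
      unfolding mwp vnorm_add_sq P_def using s2 by (simp add: power_mult_distrib)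
    have e2: "(vnorm m (mv A n wm))\<^sup>2 = a\<^sup>2 * (vnorm m (mv A n u))\<^sup>2 - 2 * a * (s * b) * P + b\<^sup>2 * (vnorm m (mv A n v))\<^sup>2"
      unfolding mwm vnorm_add_sq P_def using s2 by (simp add: power_mult_distrib)
    from rp rm e1 e2 nwp nwm show ?thesis by (simp add: algebra_simps)
  qed
  have "P \<le> \<delta> * a * b" using key[of 1] ap bp
    by (simp add: power2_eq_square)
  moreover have "- P \<le> \<delta> * a * b"
  proof -
    have "(a * b) * (- P) \<le> (a * b) * (\<delta> * a * b)" using key[of "-1"]
      by (simp add: power2_eq_square algebra_simps)
    moreover have "a * b > 0" using ap bp by simp
    ultimately show ?thesis using mult_le_cancel_left_pos[of "a*b" "- P" "\<delta> * a * b"] by linarith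
  qed
  ultimately show ?thesis unfolding P_def \<delta>_def a_def b_def by (simp add: mult.commute mult.left_commute)
qed


definition Pen :: "nat set \<Rightarrow> nat set \<Rightarrow> (nat \<Rightarrow> nat \<Rightarrow> real) \<Rightarrow> (nat \<Rightarrow> nat \<Rightarrow> real) \<Rightarrow> bool" where
 "Pen I J M B \<longleftrightarrow> (\<forall>i l. \<not> (i \<in> J \<and> l \<in> I) \<longrightarrow> B i l = 0) \<and>
     (\<forall>i\<in>I. \<forall>l\<in>J. mmul I (mmul J M B) M i l = M i l) \<and>
     (\<forall>i\<in>J. \<forall>l\<in>I. mmul J (mmul I B M) B i l = B i l) \<and>
     (\<forall>i\<in>I. \<forall>l\<in>I. mmul J M B i l = mmul J M B l i) \<and>
     (\<forall>i\<in>J. \<forall>l\<in>J. mmul I B M i l = mmul I B M l i)"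

lemma pinv_Pen: "pinv I J M = (THE B. Pen I J M B)"
  unfolding pinv_def Pen_def by simp

lemma mmul_assoc: "mmul K (mmul J X Y) Z i l = mmul J X (mmul K Y Z) i l"
  unfolding mmul_def
  by (simp add: sum_distrib_left sum_distrib_right mult.assoc sum.swap[of _ K J])

lemma mmul_cong_l: "(\<And>j. j \<in> J \<Longrightarrow> X i j = X' i j) \<Longrightarrow> mmul J X Y i l = mmul J X' Y i l"
  unfolding mmul_def by simp

lemma mmul_cong_r: "(\<And>j. j \<in> J \<Longrightarrow> Y j l = Y' j l) \<Longrightarrow> mmul J X Y i l = mmul J X Y' i l"
  unfolding mmul_def by simp

lemma mmul_sym:
  assumes "\<forall>x\<in>I. \<forall>y\<in>I. X x y = X y x" "\<forall>x\<in>I. \<forall>y\<in>I. Y x y = Y y x" "p \<in> I" "q \<in> I"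
  shows "mmul I X Y p q = mmul I Y X q p"
  unfolding mmul_def using assms by (intro sum.cong) auto

lemma L1:
  assumes "Pen I J M B" "q \<in> I"
  shows "mmul I (mmul J M B) (mmul J M C) q p = mmul J M C q p"
proof -
  have "mmul I (mmul J M B) (mmul J M C) q p = mmul J (mmul I (mmul J M B) M) C q p"
    by (simp add: mmul_assoc)
  also have "\<dots> = mmul J M C q p"
    using assms unfolding Pen_def by (intro mmul_cong_l) auto
  finally show ?thesis .
qed

lemma L2:
  assumes "Pen I J M C" "q \<in> J"
  shows "mmul J (mmul I B M) (mmul I C M) p q = mmul I B M p q"
proof -
  have "mmul J (mmul I B M) (mmul I C M) p q = mmul I B (mmul J M (mmul I C M)) p q"
    by (simp add: mmul_assoc)
  also have "\<dots> = mmul I B M p q"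
  proof (rule mmul_cong_r)
    fix x assume "x \<in> I"
    have "mmul J M (mmul I C M) x q = mmul I (mmul J M C) M x q" by (simp add: mmul_assoc)
    also have "\<dots> = M x q" using assms \<open>x \<in> I\<close> unfolding Pen_def by auto
    finally show "mmul J M (mmul I C M) x q = M x q" .
  qed
  finally show ?thesis .
qed

lemma Pen_unique:
  assumes B: "Pen I J M B" and C: "Pen I J M C"
  shows "B = C"
proof -
  have S1: "mmul J M B p q = mmul J M C p q" if "p \<in> I" "q \<in> I" for p q
  proof -
    have "mmul J M B p q = mmul I (mmul J M C) (mmul J M B) p q"
      using L1[OF C that(1)] by simp
    also have "\<dots> = mmul I (mmul J M B) (mmul J M C) q p"
      using B C that unfolding Pen_def by (intro mmul_sym) auto
    also have "\<dots> = mmul J M C q p" using L1[OF B that(2)] by simp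
    also have "\<dots> = mmul J M C p q" using C that unfolding Pen_def by auto
    finally show ?thesis .
  qed
  have S2: "mmul I B M p q = mmul I C M p q" if "p \<in> J" "q \<in> J" for p q
  proof -
    have "mmul I B M p q = mmul J (mmul I B M) (mmul I C M) p q"
      using L2[OF C that(2)] by simp
    also have "\<dots> = mmul J (mmul I C M) (mmul I B M) q p"
      using B C that unfolding Pen_def by (intro mmul_sym) auto
    also have "\<dots> = mmul I C M q p" using L2[OF B that(1)] by simp
    also have "\<dots> = mmul I C M p q" using C that unfolding Pen_def by auto
    finally show ?thesis .
  qed
  have "B i l = C i l" for i l
  proof (cases "i \<in> J \<and> l \<in> I")
    case False
    then show ?thesis using B C unfolding Pen_def by auto
  next
    case True
    have "B i l = mmul J (mmul I B M) B i l" using B True unfolding Pen_def by auto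
    also have "\<dots> = mmul J (mmul I C M) B i l" by (rule mmul_cong_l) (use S2 True in auto)
    also have "\<dots> = mmul I C (mmul J M B) i l" by (simp add: mmul_assoc)
    also have "\<dots> = mmul I C (mmul J M C) i l" by (rule mmul_cong_r) (use S1 True in auto)
    also have "\<dots> = mmul J (mmul I C M) C i l" by (simp add: mmul_assoc)
    also have "\<dots> = C i l" using C True unfolding Pen_def by auto
    finally show ?thesis .
  qed
  then show ?thesis by (intro ext)
qed

lemma pinv_is_Pen: "Pen I J M B \<Longrightarrow> Pen I J M (pinv I J M)"
  unfolding pinv_Pen by (rule theI[of "Pen I J M"]) (auto intro: Pen_unique)


definition qf :: "nat set \<Rightarrow> (nat \<Rightarrow> nat \<Rightarrow> real) \<Rightarrow> (nat \<Rightarrow> real) \<Rightarrow> real" where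
  "qf J G v = (\<Sum>i\<in>J. \<Sum>j\<in>J. v i * G i j * v j)"

lemma qf_insert:
  assumes "finite J" "s \<notin> J" "\<forall>i\<in>insert s J. \<forall>j\<in>insert s J. G i j = G j i"
  shows "qf (insert s J) G v = v s * G s s * v s + 2 * v s * (\<Sum>j\<in>J. G s j * v j) + qf J G v"
proof -
  have "qf (insert s J) G v = (v s * G s s * v s + (\<Sum>j\<in>J. v s * G s j * v j))
       + (\<Sum>i\<in>J. v i * G i s * v s + (\<Sum>j\<in>J. v i * G i j * v j))"
    unfolding qf_def using assms(1,2) by (simp add: sum.insert)
  also have "\<dots> = v s * G s s * v s + (\<Sum>j\<in>J. v s * G s j * v j) + (\<Sum>i\<in>J. v i * G i s * v s) + qf J G v"
    unfolding qf_def by (simp add: sum.distrib)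
  also have "(\<Sum>i\<in>J. v i * G i s * v s) = (\<Sum>j\<in>J. v s * G s j * v j)"
  proof (rule sum.cong[OF refl])
    fix i assume "i \<in> J"
    then have "G i s = G s i" using assms(3) by blast
    then show "v i * G i s * v s = v s * G s i * v i" by simp
  qed
  finally show ?thesis by (simp add: sum_distrib_left mult.assoc)
qed

lemma pd_solve:
  assumes "finite J"
  shows "(\<forall>i\<in>J. \<forall>j\<in>J. G i j = G j i) \<Longrightarrow> (\<forall>v. (\<exists>i\<in>J. v i \<noteq> 0) \<longrightarrow> qf J G v > 0)
    \<Longrightarrow> \<exists>v. \<forall>i\<in>J. (\<Sum>j\<in>J. G i j * v j) = w i"
  using assms
proof (induction J arbitrary: G w rule: finite_induct)
  case empty
  then show ?case by simp
next
  case (insert s J)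
  note sym = insert.prems(1) and pd = insert.prems(2)
  define c where "c = G s s"
  have cp: "c > 0"
  proof -
    have "qf (insert s J) G (\<lambda>i. if i = s then 1 else 0) > 0"
      using pd[rule_format, of "\<lambda>i. if i = s then 1 else 0"] by simp
    moreover have "qf J G (\<lambda>i. if i = s then 1 else 0) = 0"
      unfolding qf_def using insert.hyps by (intro sum.neutral) auto
    moreover have "(\<Sum>j\<in>J. G s j * (if j = s then 1 else 0)) = 0"
      using insert.hyps by (intro sum.neutral) auto
    ultimately show ?thesis unfolding c_def
      using qf_insert[OF insert.hyps(1,2) sym, of "\<lambda>i. if i = s then 1 else 0"] by simp
  qed
  define G' where "G' = (\<lambda>i j. G i j - G i s * G s j / c)"
  have sym': "\<forall>i\<in>J. \<forall>j\<in>J. G' i j = G' j i"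
    unfolding G'_def
  proof (intro ballI)
    fix i j assume "i \<in> J" "j \<in> J"
    then have "G i j = G j i" "G i s = G s i" "G j s = G s j" using sym by (meson insertI1 insertI2)+
    then show "G i j - G i s * G s j / c = G j i - G j s * G s i / c" by simp
  qed
  have qfG': "qf J G' u = qf J G u - (\<Sum>j\<in>J. G s j * u j)\<^sup>2 / c" for u
  proof -
    have "qf J G' u = qf J G u - (\<Sum>i\<in>J. \<Sum>j\<in>J. (u i * G i s) * (G s j * u j)) / c"
      unfolding qf_def G'_def
      by (simp add: algebra_simps sum_subtractf sum_divide_distrib)
    also have "(\<Sum>i\<in>J. \<Sum>j\<in>J. (u i * G i s) * (G s j * u j)) = (\<Sum>i\<in>J. u i * G i s) * (\<Sum>j\<in>J. G s j * u j)"
      by (simp add: sum_product)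
    also have "(\<Sum>i\<in>J. u i * G i s) = (\<Sum>j\<in>J. G s j * u j)"
    proof (rule sum.cong[OF refl])
      fix i assume "i \<in> J"
      then have "G i s = G s i" using sym by blast
      then show "u i * G i s = G s i * u i" by simp
    qed
    finally show ?thesis by (simp add: power2_eq_square)
  qed
  have pd': "\<forall>u. (\<exists>i\<in>J. u i \<noteq> 0) \<longrightarrow> qf J G' u > 0"
  proof (intro allI impI)
    fix u :: "nat \<Rightarrow> real" assume ne: "\<exists>i\<in>J. u i \<noteq> 0"
    define b where "b = (\<Sum>j\<in>J. G s j * u j)"
    define ut where "ut = (\<lambda>i. if i = s then - b / c else u i)"
    obtain i0 where "i0 \<in> J" "u i0 \<noteq> 0" using ne by blast
    then have "i0 \<noteq> s" using insert.hyps by auto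
    then have "\<exists>i\<in>insert s J. ut i \<noteq> 0" using \<open>i0 \<in> J\<close> \<open>u i0 \<noteq> 0\<close> unfolding ut_def by auto
    then have pos: "qf (insert s J) G ut > 0" using pd by blast
    have e1: "(\<Sum>j\<in>J. G s j * ut j) = b" unfolding b_def ut_def using insert.hyps
      by (intro sum.cong) auto
    have e2: "qf J G ut = qf J G u" unfolding qf_def ut_def using insert.hyps
      by (intro sum.cong) auto
    have "qf (insert s J) G ut = (- b / c) * c * (- b / c) + 2 * (- b / c) * b + qf J G u"
      using qf_insert[OF insert.hyps(1,2) sym, of ut] e1 e2 unfolding ut_def c_def by simp
    also have "\<dots> = qf J G u - b\<^sup>2 / c" using cp by (simp add: field_simps power2_eq_square)
    finally show "qf J G' u > 0" using pos qfG' b_def by simp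
  qed
  define w' where "w' = (\<lambda>i. w i - G i s * w s / c)"
  obtain v' where v': "\<forall>i\<in>J. (\<Sum>j\<in>J. G' i j * v' j) = w' i"
    using insert.IH[OF sym' pd'] by blast
  define v where "v = (\<lambda>i. if i = s then (w s - (\<Sum>j\<in>J. G s j * v' j)) / c else v' i)"
  have vJ: "(\<Sum>j\<in>J. G i j * v j) = (\<Sum>j\<in>J. G i j * v' j)" for i
    unfolding v_def using insert.hyps by (intro sum.cong) auto
  have "(\<Sum>j\<in>insert s J. G i j * v j) = w i" if "i \<in> insert s J" for i
  proof -
    have sp: "(\<Sum>j\<in>insert s J. G i j * v j) = G i s * v s + (\<Sum>j\<in>J. G i j * v' j)"
      using insert.hyps vJ by (simp add: sum.insert)
    have vs: "v s = (w s - (\<Sum>j\<in>J. G s j * v' j)) / c" by (simp add: v_def)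
    show ?thesis
    proof (cases "i = s")
      case True
      then show ?thesis using sp vs cp unfolding c_def by (simp add: field_simps)
    next
      case False
      then have iJ: "i \<in> J" using that by auto
      have "(\<Sum>j\<in>J. G' i j * v' j) = (\<Sum>j\<in>J. G i j * v' j) - G i s / c * (\<Sum>j\<in>J. G s j * v' j)"
        unfolding G'_def by (simp add: algebra_simps sum_subtractf sum_distrib_left)
      then have "(\<Sum>j\<in>J. G i j * v' j) = w' i + G i s / c * (\<Sum>j\<in>J. G s j * v' j)"
        using v' iJ by simp
      then have "(\<Sum>j\<in>insert s J. G i j * v j) = G i s * ((w s - (\<Sum>j\<in>J. G s j * v' j)) / c)
          + (w i - G i s * w s / c + G i s / c * (\<Sum>j\<in>J. G s j * v' j))"
        unfolding sp vs w'_def by simp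
      then show ?thesis using cp by (simp add: field_simps)
    qed
  qed
  then show ?case by blast
qed


lemma sum_delta_r: "finite J \<Longrightarrow> b \<in> J \<Longrightarrow> (\<Sum>j\<in>J. f j * (if j = b then 1 else 0)) = (f b :: real)"
proof -
  assume a: "finite J" "b \<in> J"
  have "(\<Sum>j\<in>J. f j * (if j = b then 1 else 0)) = (\<Sum>j\<in>J. if j = b then f b else 0)"
    by (intro sum.cong) auto
  then show ?thesis using a by simp
qed

lemma sum_delta_l: "finite J \<Longrightarrow> b \<in> J \<Longrightarrow> (\<Sum>j\<in>J. (if b = j then 1 else 0) * f j) = (f b :: real)"
proof -
  assume a: "finite J" "b \<in> J"
  have "(\<Sum>j\<in>J. (if b = j then 1 else 0) * f j) = (\<Sum>j\<in>J. if j = b then f b else 0)"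
    by (intro sum.cong) auto
  then show ?thesis using a by simp
qed

lemma Pen_exists:
  assumes fI: "finite I" and fJ: "finite J"
    and pd: "\<forall>v. (\<exists>i\<in>J. v i \<noteq> 0) \<longrightarrow> qf J (mmul I (\<lambda>i p. M p i) M) v > 0"
  shows "\<exists>B. Pen I J M B"
proof -
  define G where "G = mmul I (\<lambda>i p. M p i) M"
  have Gsym: "G i j = G j i" for i j unfolding G_def mmul_def by (simp add: mult.commute)
  have "\<forall>q. \<exists>v. \<forall>i\<in>J. (\<Sum>j\<in>J. G i j * v j) = (if i = q then 1 else 0)"
  proof
    fix q show "\<exists>v. \<forall>i\<in>J. (\<Sum>j\<in>J. G i j * v j) = (if i = q then 1 else 0)"
    proof (rule pd_solve[OF fJ, where G = G and w = "\<lambda>i. if i = q then 1 else 0"])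
      show "\<forall>i\<in>J. \<forall>j\<in>J. G i j = G j i" using Gsym by blast
      show "\<forall>v. (\<exists>i\<in>J. v i \<noteq> 0) \<longrightarrow> 0 < qf J G v" using pd unfolding G_def by blast
    qed
  qed
  then obtain V where V: "\<forall>q. \<forall>i\<in>J. (\<Sum>j\<in>J. G i j * V q j) = (if i = q then 1 else 0)"
    by metis
  define H where "H = (\<lambda>i q. V q i)"
  have HG: "(\<Sum>j\<in>J. G i j * H j q) = (if i = q then 1 else 0)" if "i \<in> J" for i q
    using V that unfolding H_def by blast
  have Hsym: "H a b = H b a" if ab: "a \<in> J" "b \<in> J" for a b
  proof -
    define X where "X = (\<Sum>j\<in>J. H j a * (\<Sum>i\<in>J. G j i * H i b))"
    have "X = (\<Sum>j\<in>J. H j a * (if j = b then 1 else 0))"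
      unfolding X_def by (intro sum.cong refl) (simp add: HG)
    also have "\<dots> = H b a" using sum_delta_r[OF fJ ab(2)] .
    finally have x1: "X = H b a" .
    have "X = (\<Sum>j\<in>J. \<Sum>i\<in>J. H j a * G j i * H i b)"
      unfolding X_def by (simp add: sum_distrib_left mult.assoc)
    also have "\<dots> = (\<Sum>i\<in>J. \<Sum>j\<in>J. H j a * G j i * H i b)" by (rule sum.swap)
    also have "\<dots> = (\<Sum>i\<in>J. (\<Sum>j\<in>J. G i j * H j a) * H i b)"
    proof (intro sum.cong refl)
      fix i assume "i \<in> J"
      show "(\<Sum>j\<in>J. H j a * G j i * H i b) = (\<Sum>j\<in>J. G i j * H j a) * H i b"
        unfolding sum_distrib_right by (intro sum.cong refl) (simp add: Gsym[of i])
    qed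
    also have "\<dots> = (\<Sum>i\<in>J. (if i = a then 1 else 0) * H i b)"
      by (intro sum.cong refl) (simp add: HG)
    also have "\<dots> = H a b" using sum_delta_l[OF fJ ab(1), of "\<lambda>i. H i b"]
      by (simp add: eq_commute)
    finally show ?thesis using x1 by simp
  qed
  define B where "B = (\<lambda>i l. if i \<in> J \<and> l \<in> I then (\<Sum>j\<in>J. H i j * M l j) else 0)"
  have BA: "mmul I B M i l = (if i = l then 1 else 0)" if "i \<in> J" "l \<in> J" for i l
  proof -
    have "mmul I B M i l = (\<Sum>p\<in>I. (\<Sum>j\<in>J. H i j * M p j) * M p l)"
      unfolding mmul_def B_def using that by simp
    also have "\<dots> = (\<Sum>p\<in>I. \<Sum>j\<in>J. H i j * (M p j * M p l))"
      by (simp add: sum_distrib_right mult.assoc)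
    also have "\<dots> = (\<Sum>j\<in>J. \<Sum>p\<in>I. H i j * (M p j * M p l))" by (rule sum.swap)
    also have "\<dots> = (\<Sum>j\<in>J. H i j * G j l)"
      unfolding G_def mmul_def by (simp add: sum_distrib_left)
    also have "\<dots> = (\<Sum>j\<in>J. G l j * H j i)"
    proof (intro sum.cong refl)
      fix j assume "j \<in> J"
      then have "H i j = H j i" using Hsym that(1) by blast
      then show "H i j * G j l = G l j * H j i" by (simp add: Gsym[of j])
    qed
    also have "\<dots> = (if i = l then 1 else 0)" using HG[OF that(2)] by auto
    finally show ?thesis .
  qed
  have "Pen I J M B"
    unfolding Pen_def
  proof (intro conjI ballI allI impI)
    fix i l assume "\<not> (i \<in> J \<and> l \<in> I)"
    then show "B i l = 0" unfolding B_def by auto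
  next
    fix i l assume il: "i \<in> I" "l \<in> J"
    have "mmul I (mmul J M B) M i l = mmul J M (mmul I B M) i l" by (simp add: mmul_assoc)
    also have "\<dots> = (\<Sum>j\<in>J. M i j * (if j = l then 1 else 0))"
      unfolding mmul_def[of J M] using BA il by (intro sum.cong refl) simp
    also have "\<dots> = M i l" using sum_delta_r[OF fJ il(2)] .
    finally show "mmul I (mmul J M B) M i l = M i l" .
  next
    fix i l assume il: "i \<in> J" "l \<in> I"
    have "mmul J (mmul I B M) B i l = (\<Sum>j\<in>J. (if i = j then 1 else 0) * B j l)"
      unfolding mmul_def[of J] using BA il by (intro sum.cong refl) simp
    also have "\<dots> = B i l" using sum_delta_l[OF fJ il(1)] .
    finally show "mmul J (mmul I B M) B i l = B i l" .
  next
    fix i l assume il: "i \<in> I" "l \<in> I"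
    have "mmul J M B i l = (\<Sum>j\<in>J. \<Sum>j'\<in>J. M i j * H j j' * M l j')"
      unfolding mmul_def B_def using il by (simp add: sum_distrib_left mult.assoc)
    also have "\<dots> = (\<Sum>j'\<in>J. \<Sum>j\<in>J. M l j' * H j' j * M i j)"
      by (subst sum.swap) (intro sum.cong refl, simp add: Hsym[of _ j' for j'])
    also have "\<dots> = mmul J M B l i"
      unfolding mmul_def B_def using il by (simp add: sum_distrib_left mult.assoc)
    finally show "mmul J M B i l = mmul J M B l i" .
  next
    fix i l assume "i \<in> J" "l \<in> J"
    then show "mmul I B M i l = mmul I B M l i" using BA by simp
  qed
  then show ?thesis by blast
qed


lemma mv_on:
  assumes "S \<subseteq> {..<n}" "\<And>j. j \<notin> S \<Longrightarrow> x j = 0"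
  shows "mv A n x p = (\<Sum>j\<in>S. A p j * x j)"
  unfolding mv_def using assms
  by (intro sum.mono_neutral_right) auto

lemma Pen_orth:
  assumes P: "Pen I J M B" and fI: "finite I" and fJ: "finite J" and j: "j \<in> J"
  shows "(\<Sum>p\<in>I. M p j * ((\<Sum>j'\<in>J. M p j' * (if j' \<in> J then (\<Sum>p'\<in>I. B j' p' * y p') else 0)) - y p)) = 0"
proof -
  define AB where "AB = mmul J M B"
  have x: "(\<Sum>j'\<in>J. M p j' * (if j' \<in> J then (\<Sum>p'\<in>I. B j' p' * y p') else 0)) = (\<Sum>p'\<in>I. AB p p' * y p')" for p
  proof -
    have "(\<Sum>j'\<in>J. M p j' * (if j' \<in> J then (\<Sum>p'\<in>I. B j' p' * y p') else 0))
        = (\<Sum>j'\<in>J. \<Sum>p'\<in>I. M p j' * B j' p' * y p')"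
      by (simp add: sum_distrib_left mult.assoc)
    also have "\<dots> = (\<Sum>p'\<in>I. \<Sum>j'\<in>J. M p j' * B j' p' * y p')" by (rule sum.swap)
    also have "\<dots> = (\<Sum>p'\<in>I. AB p p' * y p')"
      unfolding AB_def mmul_def by (simp add: sum_distrib_right)
    finally show ?thesis .
  qed
  have "(\<Sum>p\<in>I. M p j * (\<Sum>p'\<in>I. AB p p' * y p')) = (\<Sum>p\<in>I. \<Sum>p'\<in>I. M p j * AB p p' * y p')"
    by (simp add: sum_distrib_left mult.assoc)
  also have "\<dots> = (\<Sum>p'\<in>I. \<Sum>p\<in>I. M p j * AB p p' * y p')" by (rule sum.swap)
  also have "\<dots> = (\<Sum>p'\<in>I. mmul I AB M p' j * y p')"
  proof (intro sum.cong refl)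
    fix p' assume p': "p' \<in> I"
    have "(\<Sum>p\<in>I. M p j * AB p p' * y p') = (\<Sum>p\<in>I. AB p' p * M p j) * y p'"
      unfolding sum_distrib_right
    proof (intro sum.cong refl)
      fix p assume "p \<in> I"
      then have "AB p p' = AB p' p" using P p' unfolding Pen_def AB_def by blast
      then show "M p j * AB p p' * y p' = AB p' p * M p j * y p'" by simp
    qed
    then show "(\<Sum>p\<in>I. M p j * AB p p' * y p') = mmul I AB M p' j * y p'"
      unfolding mmul_def .
  qed
  also have "\<dots> = (\<Sum>p'\<in>I. M p' j * y p')"
    using P j unfolding Pen_def AB_def by (intro sum.cong refl) auto
  finally have "(\<Sum>p\<in>I. M p j * (\<Sum>p'\<in>I. AB p p' * y p')) = (\<Sum>p'\<in>I. M p' j * y p')" .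
  then show ?thesis unfolding x by (simp add: right_diff_distrib sum_subtractf)
qed

lemma lsq_orth:
  assumes S: "S \<subseteq> {..<n}" and cS: "card S \<le> k" and r: "ric A m n k < 1" and j: "j \<in> S"
  shows "(\<Sum>p<m. A p j * (mv A n (lsq A m S y) p - y p)) = 0"
proof -
  have fS: "finite S" using S finite_subset by blast
  have pd: "\<forall>v. (\<exists>i\<in>S. v i \<noteq> 0) \<longrightarrow> qf S (mmul {..<m} (\<lambda>i p. A p i) A) v > 0"
  proof (intro allI impI)
    fix v :: "nat \<Rightarrow> real" assume ne: "\<exists>i\<in>S. v i \<noteq> 0"
    define v' where "v' = (\<lambda>i. if i \<in> S then v i else 0)"
    have mvv: "mv A n v' p = (\<Sum>j\<in>S. A p j * v j)" for p
      using mv_on[OF S, of v' A p] unfolding v'_def by simp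
    have "qf S (mmul {..<m} (\<lambda>i p. A p i) A) v = (\<Sum>i\<in>S. \<Sum>j\<in>S. \<Sum>p<m. (A p i * v i) * (A p j * v j))"
      unfolding qf_def mmul_def sum_distrib_left sum_distrib_right
      by (intro sum.cong refl) (simp add: mult.commute mult.left_commute)
    also have "\<dots> = (\<Sum>i\<in>S. \<Sum>p<m. \<Sum>j\<in>S. (A p i * v i) * (A p j * v j))"
      by (intro sum.cong refl sum.swap)
    also have "\<dots> = (\<Sum>p<m. \<Sum>i\<in>S. \<Sum>j\<in>S. (A p i * v i) * (A p j * v j))"
      by (rule sum.swap)
    also have "\<dots> = (\<Sum>p<m. (mv A n v' p)\<^sup>2)"
      unfolding mvv power2_eq_square sum_product by simp
    also have "\<dots> = (vnorm m (mv A n v'))\<^sup>2" by (simp add: vnorm_sq)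
    finally have q: "qf S (mmul {..<m} (\<lambda>i p. A p i) A) v = (vnorm m (mv A n v'))\<^sup>2" .
    have z: "\<forall>i\<ge>n. v' i = 0" using S unfolding v'_def by auto
    have "supp n v' \<subseteq> S" unfolding supp_def v'_def by auto
    then have "card (supp n v') \<le> k" by (meson cS card_mono fS le_trans)
    then have "(1 - ric A m n k) * (vnorm n v')\<^sup>2 \<le> (vnorm m (mv A n v'))\<^sup>2"
      using ric_props[OF z] by blast
    moreover have "vnorm n v' > 0"
    proof -
      obtain i where "i \<in> S" "v i \<noteq> 0" using ne by blast
      then have "i < n" "v' i \<noteq> 0" using S unfolding v'_def by auto
      then have "vnorm n v' \<noteq> 0" using vnorm_zero_iff by blast
      then show ?thesis using vnorm_nonneg[of n v'] by linarith
    qed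
    ultimately show "qf S (mmul {..<m} (\<lambda>i p. A p i) A) v > 0" using q r
      by (smt (verit) mult_pos_pos zero_less_power)
  qed
  obtain B where "Pen {..<m} S A B" using Pen_exists[OF finite_lessThan fS pd] by blast
  then have P: "Pen {..<m} S A (pinv {..<m} S A)" by (rule pinv_is_Pen)
  have eq: "mv A n (lsq A m S y) p = (\<Sum>j'\<in>S. A p j' * lsq A m S y j')" for p
    by (rule mv_on[OF S]) (simp add: lsq_def)
  have "(\<Sum>p<m. A p j * ((\<Sum>j'\<in>S. A p j' * lsq A m S y j') - y p)) = 0"
    using Pen_orth[OF P finite_lessThan fS j, of y] unfolding lsq_def .
  then show ?thesis unfolding eq .
qed


lemma ip_mv: "ip m (mv A n u) r = (\<Sum>j<n. u j * (\<Sum>p<m. A p j * r p))"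
proof -
  have "ip m (mv A n u) r = (\<Sum>p<m. \<Sum>j<n. u j * (A p j * r p))"
    unfolding ip_def mv_def sum_distrib_right by (intro sum.cong refl) (simp add: mult.commute mult.left_commute)
  also have "\<dots> = (\<Sum>j<n. \<Sum>p<m. u j * (A p j * r p))" by (rule sum.swap)
  also have "\<dots> = (\<Sum>j<n. u j * (\<Sum>p<m. A p j * r p))" by (simp add: sum_distrib_left)
  finally show ?thesis .
qed

lemma ip_lin3: "ip m u (\<lambda>p. a p - b p + c p) = ip m u a - ip m u b + ip m u c"
  unfolding ip_def by (simp add: algebra_simps sum.distrib sum_subtractf)

lemma ip_lin2: "ip m u (\<lambda>p. a p - b p) = ip m u a - ip m u b"
  unfolding ip_def by (simp add: algebra_simps sum_subtractf)

lemma vnorm_le_sqrt: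
  assumes "(vnorm m a)\<^sup>2 \<le> c * (vnorm n b)\<^sup>2" "0 \<le> c"
  shows "vnorm m a \<le> sqrt c * vnorm n b"
proof -
  have "vnorm m a = sqrt ((vnorm m a)\<^sup>2)" using vnorm_nonneg by simp
  also have "\<dots> \<le> sqrt (c * (vnorm n b)\<^sup>2)" using assms(1) by (rule real_sqrt_le_mono)
  also have "\<dots> = sqrt c * vnorm n b" using vnorm_nonneg assms(2) by (simp add: real_sqrt_mult)
  finally show ?thesis .
qed

lemma card_supp_le:
  assumes "supp n u \<subseteq> supp n v" shows "card (supp n u) \<le> card (supp n v)"
  using assms by (simp add: card_mono finite_supp)

lemma card_supp_le_set:
  assumes "supp n u \<subseteq> S" "finite S" shows "card (supp n u) \<le> card S"
  using assms by (simp add: card_mono)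


lemma alg_id: "(d::real) < 1 \<Longrightarrow> d3 * ((d2 * X + s * E) / (1 - d) + X) + E
   = d3 * (1 + d2 / (1 - d)) * X + (1 + d3 * s / (1 - d)) * E"
proof -
  assume "d < 1"
  then have nz: "1 - d \<noteq> 0" by simp
  have "d3 * ((d2 * X + s * E) / (1 - d) + X) = d3 * (d2 * X + s * E) / (1 - d) + d3 * X"
    using nz by (simp add: algebra_simps add_divide_distrib)
  moreover have "d3 * (1 + d2 / (1 - d)) * X = d3 * X + d3 * d2 * X / (1 - d)"
    by (simp add: algebra_simps)
  moreover have "(1 + d3 * s / (1 - d)) * E = E + d3 * s * E / (1 - d)"
    by (simp add: algebra_simps)
  moreover have "d3 * (d2 * X + s * E) / (1 - d) = d3 * d2 * X / (1 - d) + d3 * s * E / (1 - d)"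
    by (simp add: algebra_simps add_divide_distrib)
  ultimately show ?thesis by simp
qed

lemma step_bounds:
  fixes A :: "nat \<Rightarrow> nat \<Rightarrow> real" and xs e :: "nat \<Rightarrow> real" and m n k :: nat and S :: "nat set"
  defines "y \<equiv> (\<lambda>i. mv A n xs i + e i)"
  assumes xs0: "\<forall>i\<ge>n. xs i = 0" and cxs: "card (supp n xs) \<le> k"
    and r3: "ric A m n (2 * k + 1) < 1"
    and col: "\<forall>j<n. vnorm m (\<lambda>i. A i j) = 1"
    and S: "S \<subseteq> {..<n}" and cS: "card S \<le> k"
  defines "x \<equiv> lsq A m S y"
  defines "g \<equiv> (\<lambda>i. \<Sum>p<m. A p i * (mv A n x p - y p))"
  shows "(\<forall>i\<in>S. g i = 0)
     \<and> (\<forall>i<n. i \<notin> S \<longrightarrow> \<bar>g i + xs i\<bar> \<le> alphaRIP A m n k * vnorm n xs + gammaRIP A m n k * vnorm m e)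
     \<and> (supp n xs \<subseteq> S \<longrightarrow> vnorm m (\<lambda>p. mv A n x p - y p) \<le> vnorm m e)"
proof -
  define d1 where "d1 = ric A m n k"
  define d2 where "d2 = ric A m n (2 * k)"
  define d3 where "d3 = ric A m n (2 * k + 1)"
  have d1n: "0 \<le> d1" and d2n: "0 \<le> d2" and d3n: "0 \<le> d3"
    unfolding d1_def d2_def d3_def by (rule ric_nonneg)+
  have "d1 \<le> d3" "d2 \<le> d3" unfolding d1_def d2_def d3_def by (rule ric_mono, simp)+
  then have d1l: "d1 < 1" and d2l: "d2 < 1" using r3 d3_def by auto
  have fS: "finite S" using S finite_subset by blast
  have g0: "\<forall>i\<in>S. g i = 0"
    unfolding g_def x_def using lsq_orth[OF S cS] d1l d1_def by blast
  have x0: "x j = 0" if "j \<notin> S" for j unfolding x_def lsq_def using that by simp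
  define r where "r = (\<lambda>p. mv A n x p - y p)"
  define hS where "hS = (\<lambda>j. if j \<in> S then x j - xs j else 0)"
  define hc where "hc = (\<lambda>j. if j \<in> S then 0 else - xs j)"
  have hsum: "x j - xs j = hS j + hc j" for j unfolding hS_def hc_def using x0 by auto
  have rform: "r p = mv A n hS p + mv A n hc p - e p" for p
  proof -
    have "r p = mv A n (\<lambda>j. x j - xs j) p - e p" unfolding r_def y_def mv_minus by simp
    also have "mv A n (\<lambda>j. x j - xs j) p = mv A n hS p + mv A n hc p"
      unfolding hsum by (rule mv_add)
    finally show ?thesis .
  qed
  have orth: "ip m (mv A n hS) r = 0"
    unfolding ip_mv
  proof (intro sum.neutral ballI)
    fix j assume "j \<in> {..<n}"
    show "hS j * (\<Sum>p<m. A p j * r p) = 0"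
      using g0 unfolding hS_def g_def r_def by auto
  qed
  have hS0: "\<forall>i\<ge>n. hS i = 0" using S unfolding hS_def by auto
  have hc0: "\<forall>i\<ge>n. hc i = 0" using xs0 unfolding hc_def by auto
  have suppS: "supp n hS \<subseteq> S" unfolding supp_def hS_def by auto
  have cS': "card (supp n hS) \<le> k" using card_supp_le_set[OF suppS fS] cS by linarith
  have suppc: "supp n hc \<subseteq> supp n xs" unfolding supp_def hc_def by auto
  have cc: "card (supp n hc) \<le> k" using card_supp_le[OF suppc] cxs by linarith
  have nhc: "vnorm n hc \<le> vnorm n xs" unfolding hc_def by (rule vnorm_mono) auto
  have ripS: "(1 - d1) * (vnorm n hS)\<^sup>2 \<le> (vnorm m (mv A n hS))\<^sup>2 \<and> (vnorm m (mv A n hS))\<^sup>2 \<le> (1 + d1) * (vnorm n hS)\<^sup>2"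
    unfolding d1_def using ric_props[OF hS0 cS'] .
  have nAhS: "vnorm m (mv A n hS) \<le> sqrt (1 + d1) * vnorm n hS"
    using vnorm_le_sqrt ripS d1n by simp
  have "(vnorm m (mv A n hS))\<^sup>2 = ip m (mv A n hS) (\<lambda>p. r p - mv A n hc p + e p)"
    unfolding ip_self[symmetric] using rform by (intro arg_cong[where f = "ip m (mv A n hS)"] ext) simp
  also have "\<dots> = - ip m (mv A n hS) (mv A n hc) + ip m (mv A n hS) e"
    unfolding ip_lin3 orth by simp
  also have "\<dots> \<le> d2 * vnorm n hS * vnorm n hc + vnorm m (mv A n hS) * vnorm m e"
  proof -
    have "\<bar>ip m (mv A n hS) (mv A n hc)\<bar> \<le> d2 * vnorm n hS * vnorm n hc"
      unfolding d2_def
    proof (rule polar[OF hS0 hc0])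
      show "\<forall>i. hS i = 0 \<or> hc i = 0" unfolding hS_def hc_def by auto
      show "card (supp n hS) + card (supp n hc) \<le> 2 * k" using cS' cc by linarith
    qed
    moreover have "\<bar>ip m (mv A n hS) e\<bar> \<le> vnorm m (mv A n hS) * vnorm m e" by (rule CS)
    ultimately show ?thesis by linarith
  qed
  also have "\<dots> \<le> vnorm n hS * (d2 * vnorm n xs + sqrt (1 + d1) * vnorm m e)"
  proof -
    have "d2 * vnorm n hS * vnorm n hc \<le> d2 * vnorm n hS * vnorm n xs"
      using nhc d2n vnorm_nonneg by (simp add: mult_left_mono)
    moreover have "vnorm m (mv A n hS) * vnorm m e \<le> sqrt (1 + d1) * vnorm n hS * vnorm m e"
      using nAhS vnorm_nonneg by (simp add: mult_right_mono)
    ultimately show ?thesis by (simp add: algebra_simps)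
  qed
  finally have "(1 - d1) * (vnorm n hS)\<^sup>2 \<le> vnorm n hS * (d2 * vnorm n xs + sqrt (1 + d1) * vnorm m e)"
    using ripS by linarith
  then have nhS: "vnorm n hS \<le> (d2 * vnorm n xs + sqrt (1 + d1) * vnorm m e) / (1 - d1)"
  proof (cases "vnorm n hS = 0")
    case True
    then show ?thesis using d1l d1n d2n by (simp add: divide_nonneg_pos vnorm_nonneg)
  next
    case False
    assume a: "(1 - d1) * (vnorm n hS)\<^sup>2 \<le> vnorm n hS * (d2 * vnorm n xs + sqrt (1 + d1) * vnorm m e)"
    have pos: "vnorm n hS > 0" using False vnorm_nonneg by (metis less_eq_real_def)
    have "vnorm n hS * ((1 - d1) * vnorm n hS) \<le> vnorm n hS * (d2 * vnorm n xs + sqrt (1 + d1) * vnorm m e)"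
      using a by (simp add: power2_eq_square algebra_simps)
    then have "(1 - d1) * vnorm n hS \<le> d2 * vnorm n xs + sqrt (1 + d1) * vnorm m e"
      using pos by simp
    then show ?thesis using d1l by (simp add: field_simps)
  qed
  have G2: "\<bar>g i + xs i\<bar> \<le> alphaRIP A m n k * vnorm n xs + gammaRIP A m n k * vnorm m e"
    if i: "i < n" "i \<notin> S" for i
  proof -
    define w where "w = (\<lambda>j. if j = i then 0 else hS j + hc j)"
    define ei where "ei = (\<lambda>j. if j = i then 1 else (0::real))"
    define hc' where "hc' = (\<lambda>j. if j = i then 0 else hc j)"
    have hw: "hS j + hc j = w j + (- xs i) * ei j" for j
      unfolding w_def ei_def hS_def hc_def using i by auto
    have mei: "mv A n ei p = A p i" for p
    proof -
      have "mv A n ei p = (\<Sum>j<n. if j = i then A p j else 0)"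
        unfolding mv_def ei_def by (intro sum.cong refl) auto
      then show ?thesis using i by simp
    qed
    have rf: "r p = mv A n w p - xs i * A p i - e p" for p
    proof -
      have "mv A n hS p + mv A n hc p = mv A n (\<lambda>j. hS j + hc j) p" by (simp add: mv_add)
      also have "\<dots> = mv A n (\<lambda>j. 1 * w j + (- xs i) * ei j) p" unfolding hw by simp
      also have "\<dots> = mv A n w p - xs i * A p i" unfolding mv_lin mei by simp
      finally show ?thesis using rform by simp
    qed
    have gi: "g i = ip m (mv A n ei) (mv A n w) - xs i * (vnorm m (\<lambda>p. A p i))\<^sup>2 - ip m (\<lambda>p. A p i) e"
    proof -
      have "g i = ip m (\<lambda>p. A p i) r" unfolding g_def ip_def r_def ..
      also have "\<dots> = ip m (\<lambda>p. A p i) (\<lambda>p. mv A n w p - xs i * A p i - e p)"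
        using rf by (intro arg_cong[where f = "ip m (\<lambda>p. A p i)"] ext) simp
      also have "\<dots> = ip m (\<lambda>p. A p i) (mv A n w) - xs i * ip m (\<lambda>p. A p i) (\<lambda>p. A p i) - ip m (\<lambda>p. A p i) e"
        unfolding ip_def by (simp add: algebra_simps sum_subtractf sum_distrib_left sum.distrib)
      finally show ?thesis unfolding ip_self mei[abs_def] by simp
    qed
    have coli: "vnorm m (\<lambda>p. A p i) = 1" using col i by blast
    have gx: "g i + xs i = ip m (mv A n ei) (mv A n w) - ip m (\<lambda>p. A p i) e"
      using gi coli by simp
    have w0: "\<forall>j\<ge>n. w j = 0" using hS0 hc0 unfolding w_def by auto
    have ei0: "\<forall>j\<ge>n. ei j = 0" using i unfolding ei_def by auto
    have nei: "vnorm n ei = 1"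
    proof -
      have "(\<Sum>j<n. (ei j)\<^sup>2) = (\<Sum>j<n. if j = i then 1 else 0)"
        unfolding ei_def by (intro sum.cong refl) auto
      then have "(\<Sum>j<n. (ei j)\<^sup>2) = 1" using i by simp
      then show ?thesis unfolding vnorm_def by simp
    qed
    have suppei: "supp n ei = {i}" unfolding supp_def ei_def using i by auto
    have suppw: "supp n w \<subseteq> supp n hS \<union> supp n hc" unfolding supp_def w_def by auto
    have "card (supp n w) \<le> card (supp n hS) + card (supp n hc)"
      using card_mono[OF finite_UnI[OF finite_supp finite_supp] suppw] card_Un_le[of "supp n hS" "supp n hc"]
      by linarith
    then have cw: "card (supp n ei) + card (supp n w) \<le> 2 * k + 1" using suppei cS' cc by simp
    have p1: "\<bar>ip m (mv A n ei) (mv A n w)\<bar> \<le> d3 * vnorm n w"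
      using polar[OF ei0 w0 _ cw, of m A] nei unfolding d3_def ei_def w_def by auto
    have p2: "\<bar>ip m (\<lambda>p. A p i) e\<bar> \<le> vnorm m e" using CS[of m "\<lambda>p. A p i" e] coli by simp
    have nw: "vnorm n w \<le> vnorm n hS + vnorm n xs"
    proof -
      have "w = (\<lambda>j. hS j + hc' j)" unfolding w_def hc'_def hS_def using i by auto
      then have "vnorm n w \<le> vnorm n hS + vnorm n hc'" using vnorm_triangle by simp
      moreover have "vnorm n hc' \<le> vnorm n xs" unfolding hc'_def hc_def by (rule vnorm_mono) auto
      ultimately show ?thesis by linarith
    qed
    have "\<bar>g i + xs i\<bar> \<le> d3 * vnorm n w + vnorm m e" using gx p1 p2 by linarith
    also have "\<dots> \<le> d3 * ((d2 * vnorm n xs + sqrt (1 + d1) * vnorm m e) / (1 - d1) + vnorm n xs) + vnorm m e"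
      using nw nhS d3n by (simp add: mult_left_mono)
    also have "\<dots> = alphaRIP A m n k * vnorm n xs + gammaRIP A m n k * vnorm m e"
      unfolding alphaRIP_def gammaRIP_def d1_def[symmetric] d2_def[symmetric] d3_def[symmetric]
      using alg_id[OF d1l, of d3 d2 "vnorm n xs" "sqrt (1 + d1)" "vnorm m e"] .
    finally show ?thesis .
  qed
  have LS: "vnorm m r \<le> vnorm m e" if sub: "supp n xs \<subseteq> S"
  proof -
    have hcz: "hc j = 0" for j
    proof (cases "j \<in> S")
      case False
      then have "j \<notin> supp n xs" using sub by auto
      then show ?thesis using xs0 unfolding hc_def supp_def by (cases "j < n") auto
    qed (simp add: hc_def)
    have "mv A n hc p = 0" for p using hcz by (simp add: mv_def)
    then have ef: "e p = 1 * mv A n hS p + (-1) * r p" for p using rform by simp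
    have "(vnorm m e)\<^sup>2 = (vnorm m (mv A n hS))\<^sup>2 + (vnorm m r)\<^sup>2"
      using vnorm_add_sq[of m 1 "mv A n hS" "-1" r] orth unfolding ef[abs_def] by simp
    then have "(vnorm m r)\<^sup>2 \<le> (vnorm m e)\<^sup>2" by simp
    then show ?thesis using power2_le_imp_le vnorm_nonneg by blast
  qed
  show ?thesis using g0 G2 LS unfolding r_def by blast
qed


lemma largest_sub: "largest n k v \<subseteq> {..<n}"
  unfolding largest_def by blast

lemma largest_card: "card (largest n k v) \<le> k"
proof (rule ccontr)
  assume c: "\<not> card (largest n k v) \<le> k"
  define L where "L = largest n k v"
  have fL: "finite L" unfolding L_def by (rule finite_subset[OF largest_sub finite_lessThan])
  have ne: "L \<noteq> {}" using c unfolding L_def by (metis card.empty le0)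
  define key where "key = (\<lambda>i. (\<bar>v i\<bar>, i))"
  have "Min (key ` L) \<in> key ` L" using fL ne by (intro Min_in) auto
  then obtain i0 where i0: "i0 \<in> L" "key i0 = Min (key ` L)" by auto
  have le: "key i0 \<le> key j" if "j \<in> L" for j using i0 fL that by simp
  define R where "R = {j. j < n \<and> (\<bar>v j\<bar> > \<bar>v i0\<bar> \<or> (\<bar>v j\<bar> = \<bar>v i0\<bar> \<and> j > i0))}"
  have "card R < k" using i0(1) unfolding L_def largest_def R_def by auto
  have "L - {i0} \<subseteq> R"
  proof
    fix j assume j: "j \<in> L - {i0}"
    then have "key i0 < key j" using le[of j] unfolding key_def by auto
    then have "\<bar>v i0\<bar> < \<bar>v j\<bar> \<or> (\<bar>v i0\<bar> \<le> \<bar>v j\<bar> \<and> i0 < j)" unfolding key_def by simp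
    moreover have "j < n" using j largest_sub L_def by auto
    ultimately show "j \<in> R" unfolding R_def by auto
  qed
  then have "card (L - {i0}) \<le> card R" by (intro card_mono) (auto simp: R_def)
  moreover have "card (L - {i0}) = card L - 1" using i0(1) fL by simp
  ultimately show False using c \<open>card R < k\<close> unfolding L_def[symmetric] by linarith
qed

lemma largest_out:
  assumes i: "i < n" "i \<notin> largest n k v" "i \<in> T" and fT: "finite T" and cT: "card T \<le> k"
  shows "\<exists>j<n. j \<notin> T \<and> \<bar>v i\<bar> \<le> \<bar>v j\<bar>"
proof (rule ccontr)
  assume na: "\<not> (\<exists>j<n. j \<notin> T \<and> \<bar>v i\<bar> \<le> \<bar>v j\<bar>)"
  define R where "R = {j. j < n \<and> (\<bar>v j\<bar> > \<bar>v i\<bar> \<or> (\<bar>v j\<bar> = \<bar>v i\<bar> \<and> j > i))}"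
  have "\<not> card R < k" using i(1,2) unfolding largest_def R_def by blast
  have "R \<subseteq> T - {i}"
  proof
    fix j assume "j \<in> R"
    then have j: "j < n" "\<bar>v j\<bar> > \<bar>v i\<bar> \<or> (\<bar>v j\<bar> = \<bar>v i\<bar> \<and> j > i)" unfolding R_def by blast+
    then have "\<bar>v i\<bar> \<le> \<bar>v j\<bar>" "j \<noteq> i" by auto
    then show "j \<in> T - {i}" using na j(1) by blast
  qed
  then have "card R \<le> card (T - {i})" using fT by (intro card_mono) auto
  moreover have "card (T - {i}) = card T - 1" using i fT by simp
  moreover have "card T \<ge> 1" using i fT by (metis One_nat_def Suc_leI card_gt_0_iff empty_iff)
  ultimately show False using cT \<open>\<not> card R < k\<close> by linarith
qed


lemma counting:
  fixes X :: "nat \<Rightarrow> nat \<Rightarrow> real" and St :: "nat \<Rightarrow> nat set" and \<sigma> :: "nat \<Rightarrow> real"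
  assumes same: "\<forall>i\<in>Sx. \<forall>t. i \<in> St t \<longrightarrow> X (Suc t) i = X t i"
    and inc: "\<forall>i\<in>Sx. \<forall>t. i \<notin> St t \<longrightarrow> \<sigma> i * X (Suc t) i \<ge> \<sigma> i * X t i + c"
    and init: "\<forall>i\<in>Sx. \<sigma> i * X 0 i \<ge> - B"
    and up: "\<forall>i\<in>Sx. \<forall>t. i \<notin> St t \<longrightarrow> \<sigma> i * X t i \<le> B + real t * d"
    and fS: "finite Sx" and cS: "card Sx \<le> k" and cp: "c > 0" and dp: "d \<ge> 0" and Bp: "B \<ge> 0"
    and bad: "\<forall>s<u. \<not> Sx \<subseteq> St s"
  shows "c * real u \<le> real k * (2 * B + real u * d + c)"
proof -
  define cnt where "cnt = (\<lambda>i t. \<Sum>s<t. if i \<notin> St s then 1 else (0::real))"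
  have cnt_suc: "cnt i (Suc t) = cnt i t + (if i \<notin> St t then 1 else 0)" for i t
    unfolding cnt_def by simp
  have lo: "\<sigma> i * X t i \<ge> - B + c * cnt i t" if i: "i \<in> Sx" for i t
  proof (induction t)
    case 0
    then show ?case using init i unfolding cnt_def by simp
  next
    case (Suc t)
    show ?case
    proof (cases "i \<in> St t")
      case True
      then show ?thesis using Suc same i cnt_suc[of i t] by simp
    next
      case False
      then have "\<sigma> i * X (Suc t) i \<ge> \<sigma> i * X t i + c" using inc i by blast
      then show ?thesis using Suc False cnt_suc[of i t] by (simp add: algebra_simps)
    qed
  qed
  have cb: "c * cnt i t \<le> 2 * B + real t * d + c" if i: "i \<in> Sx" for i t
  proof (induction t)
    case 0
    then show ?case using Bp cp unfolding cnt_def by simp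
  next
    case (Suc t)
    show ?case
    proof (cases "i \<in> St t")
      case True
      then show ?thesis using Suc cnt_suc[of i t] dp by (simp add: algebra_simps)
    next
      case False
      then have "- B + c * cnt i t \<le> B + real t * d" using lo[OF i, of t] up i by fastforce
      then show ?thesis using False cnt_suc[of i t] dp by (simp add: algebra_simps)
    qed
  qed
  have "real u \<le> (\<Sum>i\<in>Sx. cnt i u)"
  proof -
    have "(\<Sum>i\<in>Sx. cnt i u) = (\<Sum>s<u. \<Sum>i\<in>Sx. if i \<notin> St s then 1 else (0::real))"
      unfolding cnt_def by (rule sum.swap)
    also have "\<dots> \<ge> (\<Sum>s<u. (1::real))"
    proof (rule sum_mono)
      fix s assume "s \<in> {..<u}"
      then obtain i0 where i0: "i0 \<in> Sx" "i0 \<notin> St s" using bad by blast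
      have "(\<Sum>i\<in>Sx. if i \<notin> St s then 1 else (0::real)) \<ge> (if i0 \<notin> St s then 1 else 0)"
        by (rule member_le_sum) (use i0 fS in auto)
      then show "1 \<le> (\<Sum>i\<in>Sx. if i \<notin> St s then 1 else (0::real))" using i0 by simp
    qed
    finally show ?thesis by simp
  qed
  then have "c * real u \<le> (\<Sum>i\<in>Sx. c * cnt i u)" using cp
    by (simp add: sum_distrib_left[symmetric])
  also have "\<dots> \<le> (\<Sum>i\<in>Sx. 2 * B + real u * d + c)" by (rule sum_mono) (use cb in blast)
  also have "\<dots> = real (card Sx) * (2 * B + real u * d + c)" by simp
  also have "\<dots> \<le> real k * (2 * B + real u * d + c)"
    using cS Bp dp cp by (intro mult_right_mono) auto
  finally show ?thesis .
qed


theorem theorem4p1: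
  fixes A :: "nat \<Rightarrow> nat \<Rightarrow> real" and m n k :: nat
    and xs e X0 :: "nat \<Rightarrow> real" and eta :: real
  defines "y \<equiv> (\<lambda>i. mv A n xs i + e i)"
  defines "xmin \<equiv> Min ((\<lambda>i. \<bar>xs i\<bar>) ` supp n xs)"
  defines "T \<equiv> (2 * real k * (vinfnorm n X0 / eta) + (real k + 1) * xmin)
                / (xmin - 2 * real k * (alphaRIP A m n k * vnorm n xs + gammaRIP A m n k * vnorm m e))"
  assumes "0 < m" and "0 < n" and "0 < k" and "2 * k + 1 \<le> n"
    and "\<forall>i\<ge>n. xs i = 0"
    and "1 \<le> card (supp n xs)" and "card (supp n xs) \<le> k"
    and "ric A m n (2 * k + 1) < 1"
    and "\<forall>j<n. vnorm m (\<lambda>i. A i j) = 1"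
    and "gammaRIP A m n k * vnorm m e < xmin / (2 * real k) - alphaRIP A m n k * vnorm n xs"
    and "0 < eta"
  shows "(\<exists>ts::nat. real ts \<le> T \<and> supp n xs \<subseteq> seaS A m n k eta y X0 ts)
       \<and> (xmin > 2 / sqrt (1 - ric A m n (2 * k)) * vnorm m e \<longrightarrow>
           (\<forall>N::nat. real N > T \<longrightarrow>
             (\<forall>tb. is_tbest A m n k eta y X0 N tb \<longrightarrow>
                supp n xs \<subseteq> seaS A m n k eta y X0 tb \<and>
                vnorm n (\<lambda>i. seax A m n k eta y X0 tb i - xs i)
                  \<le> 2 / sqrt (1 - ric A m n k) * vnorm m e)))"
proof -
  note ydef = assms(1) and xmin_def = assms(2) and T_def = assms(3)
  note n0 = assms(5) and k0 = assms(6) and xs0 = assms(8) and c1 = assms(9) and ck = assms(10)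
    and r3 = assms(11) and col = assms(12) and hyp = assms(13) and etap = assms(14)
  define X where "X = seaX A m n k eta y X0"
  define St where "St = seaS A m n k eta y X0"
  define xt where "xt = seax A m n k eta y X0"
  define g where "g = (\<lambda>t i. \<Sum>p<m. A p i * (mv A n (xt t) p - y p))"
  define Sx where "Sx = supp n xs"
  define \<rho> where "\<rho> = alphaRIP A m n k * vnorm n xs + gammaRIP A m n k * vnorm m e"
  define B where "B = vinfnorm n X0"
  define d1 where "d1 = ric A m n k"
  define d2 where "d2 = ric A m n (2 * k)"
  define d3 where "d3 = ric A m n (2 * k + 1)"
  have d1n: "0 \<le> d1" and d2n: "0 \<le> d2" and d3n: "0 \<le> d3"
    unfolding d1_def d2_def d3_def by (rule ric_nonneg)+
  have "d1 \<le> d3" "d2 \<le> d3" unfolding d1_def d2_def d3_def by (rule ric_mono, simp)+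
  then have d1l: "d1 < 1" and d2l: "d2 < 1" using r3 d3_def by auto
  have alphan: "alphaRIP A m n k \<ge> 0"
    unfolding alphaRIP_def d1_def[symmetric] d2_def[symmetric] d3_def[symmetric]
    using d1l d2n d3n by simp
  have gamman: "gammaRIP A m n k \<ge> 0"
    unfolding gammaRIP_def d1_def[symmetric] d3_def[symmetric]
    using d1l d1n d3n by simp
  have rhon: "\<rho> \<ge> 0" unfolding \<rho>_def using alphan gamman vnorm_nonneg by simp
  have fSx: "finite Sx" unfolding Sx_def by (rule finite_supp)
  have Sxne: "Sx \<noteq> {}" using c1 unfolding Sx_def by auto
  have Sxn: "Sx \<subseteq> {..<n}" unfolding Sx_def by (rule supp_sub)
  have xmin_le: "xmin \<le> \<bar>xs i\<bar>" if "i \<in> Sx" for i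
    unfolding xmin_def using fSx that Sx_def by simp
  have xminp: "xmin > 0"
  proof -
    have "xmin \<in> (\<lambda>i. \<bar>xs i\<bar>) ` Sx" unfolding xmin_def Sx_def
      using fSx Sxne Sx_def by (intro Min_in) auto
    then show ?thesis unfolding Sx_def supp_def by auto
  qed
  have rho_lt: "\<rho> < xmin / (2 * real k)" using hyp unfolding \<rho>_def by simp
  have kp: "real k > 0" using k0 by simp
  have Dp: "xmin - 2 * real k * \<rho> > 0"
    using rho_lt kp by (simp add: field_simps)
  have Bn: "B \<ge> 0"
  proof -
    have "\<bar>X0 0\<bar> \<le> B" unfolding B_def vinfnorm_def using n0 by (intro Max_ge) auto
    then show ?thesis by linarith
  qed
  have XB: "\<bar>X0 j\<bar> \<le> B" if "j < n" for j
    unfolding B_def vinfnorm_def using that by (intro Max_ge) auto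
  have Xsuc: "X (Suc t) i = X t i - eta * g t i" for t i
    unfolding X_def g_def xt_def seax_def seaS_def by (simp add: Let_def)
  have Stsub: "St t \<subseteq> {..<n}" for t unfolding St_def seaS_def by (rule largest_sub)
  have Stc: "card (St t) \<le> k" for t unfolding St_def seaS_def by (rule largest_card)
  have StX: "St t = largest n k (X t)" for t unfolding St_def X_def seaS_def ..
  have SB: "(\<forall>i\<in>St t. g t i = 0)
     \<and> (\<forall>i<n. i \<notin> St t \<longrightarrow> \<bar>g t i + xs i\<bar> \<le> \<rho>)
     \<and> (Sx \<subseteq> St t \<longrightarrow> vnorm m (\<lambda>p. mv A n (xt t) p - y p) \<le> vnorm m e)" for t
    using step_bounds[where e = e, OF xs0 ck r3 col Stsub Stc, of t] unfolding g_def xt_def seax_def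
      \<rho>_def Sx_def St_def ydef by simp
  have SB1: "g t i = 0" if "i \<in> St t" for t i using conjunct1[OF SB[of t]] that by blast
  have SB2: "\<bar>g t i + xs i\<bar> \<le> \<rho>" if "i < n" "i \<notin> St t" for t i
    using conjunct1[OF conjunct2[OF SB[of t]]] that by blast
  have SB3: "vnorm m (\<lambda>p. mv A n (xt t) p - y p) \<le> vnorm m e" if "Sx \<subseteq> St t" for t
    using conjunct2[OF conjunct2[OF SB[of t]]] that by blast
  have k1: "1 \<le> real k" using k0 by simp
  have "xmin \<le> (2 * real k) * xmin" using mult_right_mono[of 1 "2 * real k" xmin] k1 xminp by simp
  then have "xmin / (2 * real k) \<le> xmin" using kp by (simp add: divide_le_eq mult.commute)
  then have rho_xmin: "\<rho> < xmin" using rho_lt by linarith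
  have part1: "\<exists>ts::nat. real ts \<le> T \<and> Sx \<subseteq> St ts"
  proof (rule ccontr)
    assume na: "\<not> (\<exists>ts::nat. real ts \<le> T \<and> Sx \<subseteq> St ts)"
    have Tn: "T \<ge> 0"
      unfolding T_def \<rho>_def[symmetric] B_def[symmetric]
      using Dp Bn etap xminp kp by (intro divide_nonneg_pos add_nonneg_nonneg mult_nonneg_nonneg) auto
    define u where "u = nat \<lfloor>T\<rfloor> + 1"
    have uT: "real u > T" unfolding u_def using Tn by linarith
    have bad: "\<forall>s<u. \<not> Sx \<subseteq> St s"
    proof (intro allI impI)
      fix s assume "s < u"
      then have "real s \<le> T" unfolding u_def using Tn by linarith
      then show "\<not> Sx \<subseteq> St s" using na by blast
    qed
    define \<sigma> where "\<sigma> = (\<lambda>i. sgn (xs i))"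
    define c where "c = eta * (xmin - \<rho>)"
    define d where "d = eta * \<rho>"
    have cp: "c > 0"
    proof -
      show ?thesis unfolding c_def using etap rho_xmin by simp
    qed
    have dp: "d \<ge> 0" unfolding d_def using etap rhon by simp
    have same: "\<forall>i\<in>Sx. \<forall>t. i \<in> St t \<longrightarrow> X (Suc t) i = X t i"
      using SB1 Xsuc by simp
    have inc: "\<forall>i\<in>Sx. \<forall>t. i \<notin> St t \<longrightarrow> \<sigma> i * X (Suc t) i \<ge> \<sigma> i * X t i + c"
    proof (intro ballI allI impI)
      fix i t assume i: "i \<in> Sx" and nt: "i \<notin> St t"
      have in_: "i < n" using i Sxn by auto
      have b: "\<bar>g t i + xs i\<bar> \<le> \<rho>" using SB2 in_ nt by blast
      have xne: "xs i \<noteq> 0" using i unfolding Sx_def supp_def by auto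
      have s2: "\<sigma> i * \<sigma> i = 1" unfolding \<sigma>_def using xne by (simp add: sgn_if)
      have sx: "\<sigma> i * xs i = \<bar>xs i\<bar>" unfolding \<sigma>_def by (simp add: sgn_mult_abs abs_sgn mult.commute)
      have "\<sigma> i * (g t i + xs i) \<le> \<rho>"
        using b unfolding \<sigma>_def using xne by (cases "xs i > 0") (auto simp: sgn_if)
      then have "\<sigma> i * g t i \<le> \<rho> - \<bar>xs i\<bar>" using sx by (simp add: algebra_simps)
      also have "\<dots> \<le> \<rho> - xmin" using xmin_le[OF i] by simp
      finally have "eta * (\<sigma> i * g t i) \<le> eta * (\<rho> - xmin)" using etap by (simp add: mult_left_mono)
      then show "\<sigma> i * X (Suc t) i \<ge> \<sigma> i * X t i + c"
        unfolding Xsuc c_def by (simp add: algebra_simps)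
    qed
    have init: "\<forall>i\<in>Sx. \<sigma> i * X 0 i \<ge> - B"
    proof
      fix i assume i: "i \<in> Sx"
      have "\<bar>\<sigma> i * X 0 i\<bar> \<le> \<bar>X 0 i\<bar>" unfolding \<sigma>_def by (simp add: abs_mult abs_sgn_eq)
      moreover have "\<bar>X 0 i\<bar> \<le> B" using XB i Sxn unfolding X_def by auto
      ultimately show "\<sigma> i * X 0 i \<ge> - B" by linarith
    qed
    have UJ: "\<bar>X t j\<bar> \<le> B + real t * d" if j: "j < n" "j \<notin> Sx" for j t
    proof (induction t)
      case 0
      then show ?case using XB j unfolding X_def by simp
    next
      case (Suc t)
      have xj: "xs j = 0" using j unfolding Sx_def supp_def by auto
      have "\<bar>g t j\<bar> \<le> \<rho> \<or> g t j = 0" using SB1 SB2 j xj by (metis add.right_neutral)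
      then have "\<bar>eta * g t j\<bar> \<le> d" unfolding d_def using etap rhon by (auto simp: abs_mult)
      then show ?case using Suc unfolding Xsuc by (simp add: algebra_simps)
    qed
    have up: "\<forall>i\<in>Sx. \<forall>t. i \<notin> St t \<longrightarrow> \<sigma> i * X t i \<le> B + real t * d"
    proof (intro ballI allI impI)
      fix i t assume i: "i \<in> Sx" and nt: "i \<notin> St t"
      have "i < n" using i Sxn by auto
      then obtain j where j: "j < n" "j \<notin> Sx" "\<bar>X t i\<bar> \<le> \<bar>X t j\<bar>"
        using largest_out[of i n k "X t" Sx] nt i fSx ck StX unfolding Sx_def by auto
      have "\<sigma> i * X t i \<le> \<bar>X t i\<bar>" unfolding \<sigma>_def
        by (metis abs_ge_self abs_mult abs_sgn_eq mult_cancel_right2 mult_right_mono abs_ge_zero mult_1 order_trans zero_le_one le_cases mult_left_le_one_le sgn_if) 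
      then show "\<sigma> i * X t i \<le> B + real t * d" using j UJ[OF j(1,2), of t] by linarith
    qed
    have cnt: "c * real u \<le> real k * (2 * B + real u * d + c)"
      by (rule counting[OF same inc init up fSx _ cp dp Bn bad]) (use ck Sx_def in simp)
    have "eta * (xmin - \<rho>) * real u \<le> real k * (2 * B + real u * eta * \<rho> + eta * (xmin - \<rho>))"
      using cnt unfolding c_def d_def by (simp add: mult.assoc)
    then have "eta * ((xmin - \<rho>) * real u) \<le> eta * (real k * (2 * B / eta + real u * \<rho> + (xmin - \<rho>)))"
      using etap by (simp add: algebra_simps)
    then have e1: "(xmin - \<rho>) * real u \<le> real k * (2 * B / eta + real u * \<rho> + (xmin - \<rho>))"
      using etap by simp
    have "real u * (xmin - 2 * real k * \<rho>) \<le> real u * (xmin - (real k + 1) * \<rho>)"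
    proof -
      have "(real k + 1) * \<rho> \<le> 2 * real k * \<rho>" using kp rhon k0 by (intro mult_right_mono) auto
      then show ?thesis by (intro mult_left_mono) auto
    qed
    also have "\<dots> \<le> 2 * real k * (B / eta) + real k * (xmin - \<rho>)"
      using e1 by (simp add: algebra_simps)
    also have "\<dots> \<le> 2 * real k * (B / eta) + (real k + 1) * xmin"
      using rhon xminp kp by (simp add: algebra_simps)
    finally have "real u * (xmin - 2 * real k * \<rho>) \<le> 2 * real k * (B / eta) + (real k + 1) * xmin" .
    then have "real u \<le> T"
      unfolding T_def \<rho>_def[symmetric] B_def[symmetric] using Dp by (simp add: field_simps)
    then show False using uT by simp
  qed
  then obtain ts where ts: "real ts \<le> T" "Sx \<subseteq> St ts" by blast
  have part2: "supp n xs \<subseteq> St tb \<and> vnorm n (\<lambda>i. xt tb i - xs i) \<le> 2 / sqrt (1 - d1) * vnorm m e"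
    if big: "xmin > 2 / sqrt (1 - d2) * vnorm m e" and NT: "real N > T" and tb: "is_tbest A m n k eta y X0 N tb"
    for N tb
  proof -
    define res where "res = (\<lambda>t. vnorm m (\<lambda>i. mv A n (xt t) i - y i))"
    have "ts < N" using ts NT by linarith
    then have "res tb \<le> res ts" using tb unfolding is_tbest_def res_def xt_def by blast
    also have "res ts \<le> vnorm m e" using SB3 ts unfolding res_def by blast
    finally have rtb: "res tb \<le> vnorm m e" .
    define h where "h = (\<lambda>i. xt tb i - xs i)"
    have mh: "mv A n h p = (mv A n (xt tb) p - y p) + e p" for p
      unfolding h_def mv_minus ydef by simp
    have nAh: "vnorm m (mv A n h) \<le> 2 * vnorm m e"
    proof -
      have "vnorm m (mv A n h) \<le> res tb + vnorm m e"
        unfolding mh[abs_def] res_def by (rule vnorm_triangle)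
      then show ?thesis using rtb by simp
    qed
    have xt0: "xt tb i = 0" if "i \<notin> St tb" for i
      unfolding xt_def seax_def lsq_def using that St_def by simp
    have h0: "\<forall>i\<ge>n. h i = 0" unfolding h_def using xs0 xt0 Stsub by fastforce
    have suppU: "supp n h \<subseteq> St tb \<union> Sx" unfolding h_def Sx_def supp_def using xt0 by auto
    have fSt: "finite (St tb)" using Stsub finite_subset by blast
    have "card (supp n h) \<le> card (St tb \<union> Sx)" using suppU fSt fSx by (intro card_mono) auto
    also have "\<dots> \<le> card (St tb) + card Sx" by (rule card_Un_le)
    finally have ch: "card (supp n h) \<le> 2 * k" using Stc[of tb] ck Sx_def by simp
    have rip2: "(1 - d2) * (vnorm n h)\<^sup>2 \<le> (vnorm m (mv A n h))\<^sup>2"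
      using ric_props[OF h0 ch] d2_def by blast
    have sq: "(vnorm m (mv A n h))\<^sup>2 \<le> (2 * vnorm m e)\<^sup>2"
      using nAh vnorm_nonneg by (intro power_mono) auto
    have sub: "Sx \<subseteq> St tb"
    proof (rule ccontr)
      assume "\<not> Sx \<subseteq> St tb"
      then obtain i where i: "i \<in> Sx" "i \<notin> St tb" by blast
      have "i < n" using i Sxn by auto
      then have "\<bar>h i\<bar> \<le> vnorm n h" by (rule vnorm_ge_comp)
      moreover have "h i = - xs i" unfolding h_def using xt0 i by simp
      ultimately have "xmin \<le> vnorm n h" using xmin_le[OF i(1)] by simp
      then have "xmin\<^sup>2 \<le> (vnorm n h)\<^sup>2" using xminp by (intro power_mono) auto
      then have "(1 - d2) * xmin\<^sup>2 \<le> (2 * vnorm m e)\<^sup>2"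
        using rip2 sq d2l by (smt (verit) mult_left_mono)
      moreover have "sqrt (1 - d2) * xmin > 2 * vnorm m e"
        using big d2l by (simp add: field_simps)
      then have "(sqrt (1 - d2) * xmin)\<^sup>2 > (2 * vnorm m e)\<^sup>2"
        using vnorm_nonneg by (intro power_strict_mono) auto
      then have "(1 - d2) * xmin\<^sup>2 > (2 * vnorm m e)\<^sup>2"
        using d2l by (simp add: power_mult_distrib)
      ultimately show False by linarith
    qed
    have "supp n h \<subseteq> St tb" using suppU sub by auto
    then have ch1: "card (supp n h) \<le> k" using Stc[of tb] fSt card_mono le_trans by metis
    have rip1: "(1 - d1) * (vnorm n h)\<^sup>2 \<le> (vnorm m (mv A n h))\<^sup>2"
      using ric_props[OF h0 ch1] d1_def by blast
    have "(sqrt (1 - d1) * vnorm n h)\<^sup>2 \<le> (2 * vnorm m e)\<^sup>2"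
      using rip1 sq d1l by (simp add: power_mult_distrib)
    then have "sqrt (1 - d1) * vnorm n h \<le> 2 * vnorm m e"
      using vnorm_nonneg power2_le_imp_le by (metis mult_nonneg_nonneg zero_le_numeral)
    then have "vnorm n h \<le> 2 * vnorm m e / sqrt (1 - d1)"
      using d1l by (simp add: field_simps)
    then show ?thesis using sub unfolding h_def Sx_def by simp
  qed
  show ?thesis
    using part1 part2 unfolding Sx_def St_def xt_def d1_def d2_def by blast
qed

end
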